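(* Let $\langle\mathcal{C},\mathcal{P}\rangle$ be a probabilistic knowledge base with $k$ equality constraints $\sum_{j=1}^{\ell}b_{ij}P(C_j\sqsubseteq D_j)=q_i$ over the axioms $C_1\sqsubseteq D_1,\dots,C_\ell\sqsubseteq D_\ell$; let $B=(b_{ij})$, $q=(q_i)$. Let $A$ be the $\ell\times 2^\ell$ matrix whose columns are all vectors $u\in\{0,1\}^\ell$, and let $$C=\begin{pmatrix}0 & B\\ A & -I_\ell\\ \mathbf{1} & 0\end{pmatrix},\qquad d=\begin{pmatrix}q\\0\\1\end{pmatrix},$$ where $\mathbf{1}$ is a row of $2^\ell$ ones. Define the cost vector $c\in\{0,1\}^{2^\ell+\ell}$ by: for a column of $C$ coming from a column $u$ of $A$, $c_j=0$ if $u$ represents a $\mathcal{C}$-satisfiable interpretation and $c_j=1$ otherwise; for each of the last $\ell$ columns, $c_j=0$. Then $\langle\mathcal{C},\mathcal{P}\rangle$ is satisfiable if and only if the linear program $\min\{c^{\top}\pi^x \mid C\pi^x=d,\ \pi^x\ge0\}$ is feasible and its optimal value is $0$.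
   Context: $\mathcal{EL}^{++}$ (without concrete domains): over countable sets $\mathsf{N_C}$ (concept names), $\mathsf{N_R}$ (role names), $\mathsf{N_I}$ (individual names), concept descriptions are $\top,\bot$, concept names, $C\sqcap D$, $\exists r.C$ ($r\in\mathsf{N_R}$) and nominals $\{a\}$ ($a\in\mathsf{N_I}$). An axiom (GCI) is $C\sqsubseteq D$; a role inclusion is $r_1\circ\cdots\circ r_k\sqsubseteq r$; a CBox is a finite set of axioms and role inclusions. An interpretation $\mathcal{I}=\langle\Delta^\mathcal{I},\cdot^\mathcal{I}\rangle$ has nonempty domain and maps concept names to subsets, role names to binary relations, individuals to elements, with $\top^\mathcal{I}=\Delta^\mathcal{I}$, $\bot^\mathcal{I}=\emptyset$, $(C\sqcap D)^\mathcal{I}=C^\mathcal{I}\cap D^\mathcal{I}$, $(\exists r.C)^\mathcal{I}=\{x\mid \exists y\in C^\mathcal{I},(x,y)\in r^\mathcal{I}\}$, $\{a\}^\mathcal{I}=\{a^\mathcal{I}\}$; $\mathcal{I}\models C\sqsubseteq D$ iff $C^\mathcal{I}\subseteq D^\mathcal{I}$, $\mathcal{I}\models r_1\circ\cdots\circ r_k\sqsubseteq r$ iff $r_1^\mathcal{I}\circ\cdots\circ r_k^\mathcal{I}\subseteq r^\mathcal{I}$, and $\mathcal{I}\models\mathcal{C}$ iff it satisfies every element of $\mathcal{C}$. Probabilistic semantics: given finitely many interpretations $\mathcal{I}_1,\dots,\mathcal{I}_m$ and a probability distribution $P$ on them, $P(C\sqsubseteq D)=\sum_{\mathcal{I}_i\models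 C\sqsubseteq D}P(\mathcal{I}_i)$. A probabilistic constraint is $b_1 P(C_1\sqsubseteq D_1)+\cdots+b_\ell P(C_\ell\sqsubseteq D_\ell)\bowtie q$ with $b_i,q\in\mathbb{Q}$, $\bowtie\in\{\le,\ge,=\}$; a PBox is a finite set of such constraints; a probabilistic knowledge base is a pair $\langle\mathcal{C},\mathcal{P}\rangle$ of a CBox and a PBox. It is satisfiable if there exist finitely many interpretations and a probability distribution $P$ over them such that every interpretation with $P(\mathcal{I}_i)>0$ satisfies $\mathcal{C}$ and all constraints of $\mathcal{P}$ hold. Given a CBox $\mathcal{C}$ and axioms $C_1\sqsubseteq D_1,\dots,C_n\sqsubseteq D_n$, a vector $u\in\{0,1\}^n$ represents a $\mathcal{C}$-satisfiable interpretation if there is an interpretation $\mathcal{I}\models\mathcal{C}$ with $u_i=1$ iff $\mathcal{I}\models C_i\sqsubseteq D_i$, for $1\le i\le n$. *)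

theory Defs
  imports Complex_Main
begin

datatype ('c, 'r, 'i) concept =
    Top
  | Bot
  | CN 'c
  | Conj "('c, 'r, 'i) concept" "('c, 'r, 'i) concept"
  | Ex 'r "('c, 'r, 'i) concept"
  | Nom 'i

datatype ('c, 'r, 'i) gci = GCI "('c, 'r, 'i) concept" "('c, 'r, 'i) concept"

datatype ('c, 'r, 'i) cbox_elem =
    Ax "('c, 'r, 'i) gci"
  | RI "'r list" 'r

record ('c, 'r, 'i, 'd) interp =
  dom :: "'d set"
  cn  :: "'c \<Rightarrow> 'd set"
  rn  :: "'r \<Rightarrow> ('d \<times> 'd) set"
  ind :: "'i \<Rightarrow> 'd"

definition is_interp :: "('c, 'r, 'i, 'd) interp \<Rightarrow> bool" where
  "is_interp I \<longleftrightarrow> dom I \<noteq> {} \<and> (\<forall>A. cn I A \<subseteq> dom I)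
     \<and> (\<forall>r. rn I r \<subseteq> dom I \<times> dom I) \<and> (\<forall>a. ind I a \<in> dom I)"

fun ext :: "('c, 'r, 'i, 'd) interp \<Rightarrow> ('c, 'r, 'i) concept \<Rightarrow> 'd set" where
  "ext I Top = dom I"
| "ext I Bot = {}"
| "ext I (CN A) = cn I A"
| "ext I (Conj C D) = ext I C \<inter> ext I D"
| "ext I (Ex r C) = {x. \<exists>y \<in> ext I C. (x, y) \<in> rn I r}"
| "ext I (Nom a) = {ind I a}"

fun role_comp :: "('c, 'r, 'i, 'd) interp \<Rightarrow> 'r list \<Rightarrow> ('d \<times> 'd) set" where
  "role_comp I [] = Id_on (dom I)"
| "role_comp I [r] = rn I r"
| "role_comp I (r # rs) = rn I r O role_comp I rs"

definition models_gci :: "('c, 'r, 'i, 'd) interp \<Rightarrow> ('c, 'r, 'i) gci \<Rightarrow> bool" where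
  "models_gci I ax = (case ax of GCI C D \<Rightarrow> ext I C \<subseteq> ext I D)"

fun models_elem :: "('c, 'r, 'i, 'd) interp \<Rightarrow> ('c, 'r, 'i) cbox_elem \<Rightarrow> bool" where
  "models_elem I (Ax ax) = models_gci I ax"
| "models_elem I (RI rs r) = (role_comp I rs \<subseteq> rn I r)"

definition models_cbox :: "('c, 'r, 'i, 'd) interp \<Rightarrow> ('c, 'r, 'i) cbox_elem set \<Rightarrow> bool" where
  "models_cbox I CB \<longleftrightarrow> (\<forall>e \<in> CB. models_elem I e)"

datatype rel = Leq | Geq | Eq

datatype ('c, 'r, 'i) pconstr = PC "(rat \<times> ('c, 'r, 'i) gci) list" rel rat

definition prob_ax :: "nat \<Rightarrow> (nat \<Rightarrow> ('c, 'r, 'i, 'd) interp) \<Rightarrow> (nat \<Rightarrow> real)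
    \<Rightarrow> ('c, 'r, 'i) gci \<Rightarrow> real" where
  "prob_ax m Is p ax = (\<Sum>i \<in> {i. i < m \<and> models_gci (Is i) ax}. p i)"

fun rel_holds :: "rel \<Rightarrow> real \<Rightarrow> real \<Rightarrow> bool" where
  "rel_holds Leq x y = (x \<le> y)"
| "rel_holds Geq x y = (x \<ge> y)"
| "rel_holds Eq x y = (x = y)"

fun constr_holds :: "nat \<Rightarrow> (nat \<Rightarrow> ('c, 'r, 'i, 'd) interp) \<Rightarrow> (nat \<Rightarrow> real)
    \<Rightarrow> ('c, 'r, 'i) pconstr \<Rightarrow> bool" where
  "constr_holds m Is p (PC ts rl q) =
     rel_holds rl (\<Sum>(b, ax) \<leftarrow> ts. real_of_rat b * prob_ax m Is p ax) (real_of_rat q)"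

definition pkb_sat :: "'d itself \<Rightarrow> ('c, 'r, 'i) cbox_elem set \<Rightarrow> ('c, 'r, 'i) pconstr set \<Rightarrow> bool" where
  "pkb_sat (_ :: 'd itself) CB PB \<longleftrightarrow>
     (\<exists>(m :: nat) (Is :: nat \<Rightarrow> ('c, 'r, 'i, 'd) interp) (p :: nat \<Rightarrow> real).
        (\<forall>i < m. is_interp (Is i) \<and> p i \<ge> 0) \<and> (\<Sum>i < m. p i) = 1
        \<and> (\<forall>i < m. p i > 0 \<longrightarrow> models_cbox (Is i) CB)
        \<and> (\<forall>pc \<in> PB. constr_holds m Is p pc))"

definition represents_sat :: "'d itself \<Rightarrow> ('c, 'r, 'i) cbox_elem set
    \<Rightarrow> (nat \<Rightarrow> ('c, 'r, 'i) gci) \<Rightarrow> nat \<Rightarrow> (nat \<Rightarrow> real) \<Rightarrow> bool" where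
  "represents_sat (_ :: 'd itself) CB axs l u \<longleftrightarrow>
     (\<exists>I :: ('c, 'r, 'i, 'd) interp. is_interp I \<and> models_cbox I CB
        \<and> (\<forall>i < l. u i = 1 \<longleftrightarrow> models_gci I (axs i)))"

text \<open>Column t < 2^l of A is the 0/1 vector whose i-th entry is bit i of t;
  this enumerates all of {0,1}^l exactly once.\<close>
definition Acol :: "nat \<Rightarrow> nat \<Rightarrow> real" where
  "Acol t i = (if odd (t div 2 ^ i) then 1 else 0)"

text \<open>The matrix C (rows: k rows [0 | B], l rows [A | -I], one row [1 | 0];
  columns: 2^l columns for A, then l columns), and right-hand side d.\<close>
definition Cmat :: "nat \<Rightarrow> nat \<Rightarrow> (nat \<Rightarrow> nat \<Rightarrow> rat) \<Rightarrow> nat \<Rightarrow> nat \<Rightarrow> real" where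
  "Cmat k l B i j =
     (if i < k then (if j < 2 ^ l then 0 else real_of_rat (B i (j - 2 ^ l)))
      else if i < k + l then
        (if j < 2 ^ l then Acol j (i - k) else if j - 2 ^ l = i - k then -1 else 0)
      else (if j < 2 ^ l then 1 else 0))"

definition dvec :: "nat \<Rightarrow> nat \<Rightarrow> (nat \<Rightarrow> rat) \<Rightarrow> nat \<Rightarrow> real" where
  "dvec k l q i = (if i < k then real_of_rat (q i) else if i < k + l then 0 else 1)"

definition cvec :: "'d itself \<Rightarrow> ('c, 'r, 'i) cbox_elem set \<Rightarrow> (nat \<Rightarrow> ('c, 'r, 'i) gci)
    \<Rightarrow> nat \<Rightarrow> nat \<Rightarrow> real" where
  "cvec T CB axs l j =
     (if j < 2 ^ l then (if represents_sat T CB axs l (Acol j) then 0 else 1) else 0)"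

definition lp_feasible_pt :: "nat \<Rightarrow> nat \<Rightarrow> (nat \<Rightarrow> nat \<Rightarrow> real) \<Rightarrow> (nat \<Rightarrow> real)
    \<Rightarrow> (nat \<Rightarrow> real) \<Rightarrow> bool" where
  "lp_feasible_pt m n M d x \<longleftrightarrow>
     (\<forall>j < n. x j \<ge> 0) \<and> (\<forall>i < m. (\<Sum>j < n. M i j * x j) = d i)"

definition lp_min_value :: "nat \<Rightarrow> nat \<Rightarrow> (nat \<Rightarrow> real) \<Rightarrow> (nat \<Rightarrow> nat \<Rightarrow> real)
    \<Rightarrow> (nat \<Rightarrow> real) \<Rightarrow> real \<Rightarrow> bool" where
  "lp_min_value m n c M d v \<longleftrightarrow>
     (\<exists>x. lp_feasible_pt m n M d x \<and> (\<Sum>j < n. c j * x j) = v)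
     \<and> (\<forall>x. lp_feasible_pt m n M d x \<longrightarrow> (\<Sum>j < n. c j * x j) \<ge> v)"

end

theory Submission imports Defs begin

fun enc :: "(nat \<Rightarrow> bool) \<Rightarrow> nat \<Rightarrow> nat" where
  "enc P 0 = 0"
| "enc P (Suc n) = enc P n + (if P n then 2 ^ n else 0)"

lemma enc_lt: "enc P n < 2 ^ n"
  by (induction n) auto

lemma enc_bit: "i < n \<Longrightarrow> odd (enc P n div 2 ^ i) \<longleftrightarrow> P i"
proof (induction n)
  case 0 then show ?case by simp
next
  case (Suc n)
  show ?case
  proof (cases "i < n")
    case True
    define c :: nat where "c = (if P n then 2 ^ (n - i) else 0)"
    have eq: "(if P n then 2 ^ n else 0) = c * 2 ^ i"
      using True by (simp add: c_def power_add[symmetric])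
    have "enc P (Suc n) div 2 ^ i = enc P n div 2 ^ i + c"
      by (simp only: enc.simps eq div_mult_self1 div_mult_self2) simp
    moreover have "even c" using True by (simp add: c_def)
    ultimately show ?thesis using Suc True by simp
  next
    case False
    then have "i = n" using Suc by simp
    have "enc P (Suc n) div 2 ^ i = (if P n then 1 else 0)"
      using enc_lt[of P n] \<open>i = n\<close> by (auto simp: div_add_self2)
    then show ?thesis using \<open>i = n\<close> by simp
  qed
qed

lemma Acol_enc: "i < n \<Longrightarrow> Acol (enc P n) i = (if P i then 1 else 0)"
  by (simp add: Acol_def enc_bit)

lemma sum_split: "(\<Sum>j<a+b. f j) = (\<Sum>j<a. f j) + (\<Sum>j<b. f (a+j)::real)" for b :: nat
  by (induction b) (auto simp: add.assoc)

lemma sum_if_filter: "(\<Sum>i<m. if P i then f i else (0::real)) = sum f {i. i<(m::nat) \<and> P i}"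
proof -
  have "{i. i<m \<and> P i} = {i \<in> {..<m}. P i}" by auto
  then show ?thesis using sum.inter_filter[of "{..<m}" f P] by simp
qed

lemma sum_list_upt_lt: "sum_list (map f [0..<n]) = (\<Sum>j<n. f j :: real)"
  by (induction n) auto

lemma sum_list_comp: "(\<Sum>(b, ax)\<leftarrow>[(B j, axs j). j \<leftarrow> [0..<l]]. g b ax) = (\<Sum>j<l. g (B j) (axs j) :: real)"
  by (induction l) auto

lemma sum_delta_neg: "j0 < (l::nat) \<Longrightarrow> (\<Sum>j<l. (if j = j0 then -1 else 0) * f j) = - (f j0 :: real)"
proof -
  assume "j0 < l"
  have "(\<Sum>j<l. (if j = j0 then -1 else 0) * f j) = (\<Sum>j<l. if j = j0 then - f j else 0)"
    by (rule sum.cong) auto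
  also have "\<dots> = - f j0" using \<open>j0 < l\<close> by simp
  finally show ?thesis .
qed


lemma Acol_01: "Acol t j = 0 \<or> Acol t j = 1"
  by (simp add: Acol_def)

theorem lemma6:
  fixes CB :: "('c, 'r, 'i) cbox_elem set"
    and axs :: "nat \<Rightarrow> ('c, 'r, 'i) gci"
    and B :: "nat \<Rightarrow> nat \<Rightarrow> rat" and q :: "nat \<Rightarrow> rat"
    and k l :: nat
  assumes "finite CB"
  shows "pkb_sat TYPE('d) CB {PC [(B i j, axs j). j \<leftarrow> [0..<l]] Eq (q i) | i. i < k}
     \<longleftrightarrow> lp_min_value (k + l + 1) (2 ^ l + l) (cvec TYPE('d) CB axs l)
            (Cmat k l B) (dvec k l q) 0"
proof
  have cnn: "\<And>j. cvec TYPE('d) CB axs l j \<ge> 0" by (simp add: cvec_def)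
  assume "pkb_sat TYPE('d) CB {PC [(B i j, axs j). j \<leftarrow> [0..<l]] Eq (q i) | i. i < k}"
  then obtain m and Is :: "nat \<Rightarrow> ('c, 'r, 'i, 'd) interp" and p where
    H1: "\<forall>i < m. is_interp (Is i) \<and> p i \<ge> 0" and H2: "(\<Sum>i < m. p i) = 1"
    and H3: "\<forall>i < m. p i > 0 \<longrightarrow> models_cbox (Is i) CB"
    and H4: "\<forall>pc \<in> {PC [(B i j, axs j). j \<leftarrow> [0..<l]] Eq (q i) | i. i < k}. constr_holds m Is p pc"
    unfolding pkb_sat_def by blast
  define code where "code i = enc (\<lambda>j. models_gci (Is i) (axs j)) l" for i
  define x where "x t = (if t < 2^l then sum p {i. i<m \<and> code i = t}
                         else prob_ax m Is p (axs (t - 2^l)))" for t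
  have code_lt: "code i < 2^l" for i by (simp add: code_def enc_lt)
  have grp: "(\<Sum>t<2^l. \<Sum>i\<in>{i. i<m \<and> code i = t}. f i) = (\<Sum>i<m. f i)" for f :: "nat \<Rightarrow> real"
    using sum.group[of "{..<m}" "{..<2^l}" code f] code_lt by auto
  have key: "(\<Sum>t<2^l. Acol t j * x t) = prob_ax m Is p (axs j)" if "j < l" for j
  proof -
    have "(\<Sum>t<2^l. Acol t j * x t) = (\<Sum>t<2^l. \<Sum>i\<in>{i. i<m \<and> code i = t}. Acol (code i) j * p i)"
    proof (rule sum.cong[OF refl])
      fix t assume "t \<in> {..<(2::nat)^l}"
      then have "x t = sum p {i. i<m \<and> code i = t}" by (simp add: x_def)
      then show "Acol t j * x t = (\<Sum>i\<in>{i. i<m \<and> code i = t}. Acol (code i) j * p i)"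
        by (simp add: sum_distrib_left)
    qed
    also have "\<dots> = (\<Sum>i<m. Acol (code i) j * p i)" by (rule grp)
    also have "\<dots> = (\<Sum>i<m. if models_gci (Is i) (axs j) then p i else 0)"
    proof (rule sum.cong[OF refl])
      fix i
      have "Acol (code i) j = (if models_gci (Is i) (axs j) then 1 else 0)"
        unfolding code_def by (rule Acol_enc[OF that])
      then show "Acol (code i) j * p i = (if models_gci (Is i) (axs j) then p i else 0)" by simp
    qed
    also have "\<dots> = prob_ax m Is p (axs j)"
      unfolding prob_ax_def by (rule sum_if_filter)
    finally show ?thesis .
  qed
  have pnn: "prob_ax m Is p ax \<ge> 0" for ax
    unfolding prob_ax_def using H1 by (intro sum_nonneg) auto
  have xnn: "x t \<ge> 0" for t
    using H1 pnn by (auto simp: x_def intro!: sum_nonneg)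
  have feas: "lp_feasible_pt (k + l + 1) (2 ^ l + l) (Cmat k l B) (dvec k l q) x"
    unfolding lp_feasible_pt_def
  proof (intro conjI allI impI)
    fix j show "0 \<le> x j" by (rule xnn)
  next
    fix i assume i: "i < k + l + 1"
    show "(\<Sum>j<2 ^ l + l. Cmat k l B i j * x j) = dvec k l q i"
    proof (cases "i < k")
      case True
      have "constr_holds m Is p (PC [(B i j, axs j). j \<leftarrow> [0..<l]] Eq (q i))"
        using H4 True by blast
      then have "(\<Sum>j<l. real_of_rat (B i j) * prob_ax m Is p (axs j)) = real_of_rat (q i)"
        by (simp add: sum_list_upt_lt comp_def)
      then show ?thesis using True
        by (simp add: sum_split Cmat_def dvec_def x_def)
    next
      case False
      show ?thesis
      proof (cases "i < k + l")
        case True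
        define j0 where "j0 = i - k"
        have j0: "j0 < l" using True False by (simp add: j0_def)
        have "(\<Sum>j<2 ^ l + l. Cmat k l B i j * x j)
            = (\<Sum>t<2^l. Acol t j0 * x t) + (\<Sum>j<l. (if j = j0 then -1 else 0) * x (2^l + j))"
          using True False by (simp add: sum_split Cmat_def j0_def)
        also have "\<dots> = 0" using key[OF j0] sum_delta_neg[OF j0] by (simp add: x_def)
        finally show ?thesis using True False by (simp add: dvec_def)
      next
        case False2: False
        have "(\<Sum>j<2 ^ l + l. Cmat k l B i j * x j) = (\<Sum>t<2^l. x t)"
          using False False2 by (simp add: sum_split Cmat_def)
        also have "\<dots> = (\<Sum>t<2^l. sum p {i. i<m \<and> code i = t})"
          by (rule sum.cong) (auto simp: x_def)
        also have "\<dots> = 1" using grp[of p] H2 by simp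
        finally show ?thesis using False False2 by (simp add: dvec_def)
      qed
    qed
  qed
  have cost: "(\<Sum>j<2 ^ l + l. cvec TYPE('d) CB axs l j * x j) = 0"
  proof (rule sum.neutral, rule ballI)
    fix t assume "t \<in> {..<2 ^ l + l}"
    show "cvec TYPE('d) CB axs l t * x t = 0"
    proof (cases "t < 2^l \<and> \<not> represents_sat TYPE('d) CB axs l (Acol t)")
      case True
      have "p i = 0" if "i < m" "code i = t" for i
      proof (rule ccontr)
        assume "p i \<noteq> 0"
        then have "p i > 0" using H1 that by force
        then have "models_cbox (Is i) CB" "is_interp (Is i)" using H1 H3 that by auto
        moreover have "\<forall>j<l. Acol t j = 1 \<longleftrightarrow> models_gci (Is i) (axs j)"
        proof (intro allI impI)
          fix j assume "j < l"
          have "Acol (code i) j = (if models_gci (Is i) (axs j) then 1 else 0)"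
            unfolding code_def by (rule Acol_enc[OF \<open>j < l\<close>])
          then show "Acol t j = 1 \<longleftrightarrow> models_gci (Is i) (axs j)" using that by simp
        qed
        ultimately have "represents_sat TYPE('d) CB axs l (Acol t)"
          unfolding represents_sat_def by blast
        then show False using True by blast
      qed
      then have "x t = 0" using True by (simp add: x_def)
      then show ?thesis by simp
    next
      case False
      then show ?thesis by (auto simp: cvec_def)
    qed
  qed
  show "lp_min_value (k + l + 1) (2 ^ l + l) (cvec TYPE('d) CB axs l) (Cmat k l B) (dvec k l q) 0"
    unfolding lp_min_value_def
  proof (intro conjI allI impI)
    show "\<exists>x. lp_feasible_pt (k + l + 1) (2 ^ l + l) (Cmat k l B) (dvec k l q) x \<and>
        (\<Sum>j<2 ^ l + l. cvec TYPE('d) CB axs l j * x j) = 0" using feas cost by blast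
  next
    fix y assume "lp_feasible_pt (k + l + 1) (2 ^ l + l) (Cmat k l B) (dvec k l q) y"
    then show "0 \<le> (\<Sum>j<2 ^ l + l. cvec TYPE('d) CB axs l j * y j)"
      unfolding lp_feasible_pt_def using cnn by (auto intro!: sum_nonneg)
  qed
next
  assume "lp_min_value (k + l + 1) (2 ^ l + l) (cvec TYPE('d) CB axs l) (Cmat k l B) (dvec k l q) 0"
  then obtain x where feas: "lp_feasible_pt (k + l + 1) (2 ^ l + l) (Cmat k l B) (dvec k l q) x"
    and cost: "(\<Sum>j<2 ^ l + l. cvec TYPE('d) CB axs l j * x j) = 0"
    unfolding lp_min_value_def by blast
  have xnn: "\<And>j. j < 2^l + l \<Longrightarrow> x j \<ge> 0" using feas by (simp add: lp_feasible_pt_def)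
  have rows: "\<And>i. i < k + l + 1 \<Longrightarrow> (\<Sum>j<2 ^ l + l. Cmat k l B i j * x j) = dvec k l q i"
    using feas by (simp add: lp_feasible_pt_def)
  have terms: "\<forall>j\<in>{..<2^l+l}. cvec TYPE('d) CB axs l j * x j = 0"
    using cost xnn by (subst sum_nonneg_eq_0_iff[symmetric]) (auto simp: cvec_def)
  have rep: "represents_sat TYPE('d) CB axs l (Acol t)" if "t < 2^l" "x t > 0" for t
  proof -
    have "cvec TYPE('d) CB axs l t * x t = 0" using terms that by auto
    then show ?thesis using that by (auto simp: cvec_def split: if_splits)
  qed
  define I0 :: "('c, 'r, 'i, 'd) interp" where
    "I0 = \<lparr>dom = {undefined}, cn = \<lambda>_. {}, rn = \<lambda>_. {}, ind = \<lambda>_. undefined\<rparr>"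
  have I0: "is_interp I0" by (simp add: is_interp_def I0_def)
  define Is :: "nat \<Rightarrow> ('c, 'r, 'i, 'd) interp" where
    "Is t = (if t < 2^l \<and> x t > 0 then (SOME I. is_interp I \<and> models_cbox I CB
              \<and> (\<forall>i<l. Acol t i = 1 \<longleftrightarrow> models_gci I (axs i))) else I0)" for t
  have IsP: "is_interp (Is t) \<and> models_cbox (Is t) CB \<and> (\<forall>i<l. Acol t i = 1 \<longleftrightarrow> models_gci (Is t) (axs i))"
    if "t < 2^l" "x t > 0" for t
  proof -
    let ?Q = "\<lambda>I :: ('c, 'r, 'i, 'd) interp. is_interp I \<and> models_cbox I CB
              \<and> (\<forall>i<l. Acol t i = 1 \<longleftrightarrow> models_gci I (axs i))"
    have ex: "\<exists>I. ?Q I"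
      using rep[OF that] unfolding represents_sat_def by blast
    have eq: "Is t = (SOME I. ?Q I)" using that by (simp add: Is_def)
    have "?Q (SOME I. ?Q I)" using ex by (rule someI_ex)
    then have "?Q (Is t)" unfolding eq .
    then show ?thesis by blast
  qed
  have Isi: "is_interp (Is t)" for t
  proof (cases "t < 2^l \<and> x t > 0")
    case True then show ?thesis using IsP by blast
  next
    case False
    then have "Is t = I0" unfolding Is_def by (simp only: if_False)
    then show ?thesis using I0 by simp
  qed
  have ycol: "x (2^l + j) = (\<Sum>t<2^l. Acol t j * x t)" if "j < l" for j
  proof -
    have "(\<Sum>j'<2 ^ l + l. Cmat k l B (k + j) j' * x j') = dvec k l q (k + j)"
      using rows[of "k + j"] that by simp
    then have "(\<Sum>t<2^l. Acol t j * x t) + (\<Sum>j'<l. (if j' = j then -1 else 0) * x (2^l + j')) = 0"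
      using that by (simp add: sum_split Cmat_def dvec_def)
    then show ?thesis using sum_delta_neg[OF that, of "\<lambda>j'. x (2^l + j')"] by simp
  qed
  have pax: "prob_ax (2^l) Is x (axs j) = x (2^l + j)" if "j < l" for j
  proof -
    have "prob_ax (2^l) Is x (axs j) = (\<Sum>t<2^l. if models_gci (Is t) (axs j) then x t else 0)"
      unfolding prob_ax_def by (rule sum_if_filter[symmetric])
    also have "\<dots> = (\<Sum>t<2^l. Acol t j * x t)"
    proof (rule sum.cong[OF refl])
      fix t assume t: "t \<in> {..<(2::nat)^l}"
      show "(if models_gci (Is t) (axs j) then x t else 0) = Acol t j * x t"
      proof (cases "x t > 0")
        case True
        then have "Acol t j = 1 \<longleftrightarrow> models_gci (Is t) (axs j)" using IsP t that by auto
        then show ?thesis using Acol_01[of t j] by auto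
      next
        case False
        then have "x t = 0" using xnn[of t] t by force
        then show ?thesis by simp
      qed
    qed
    finally show ?thesis using ycol[OF that] by simp
  qed
  have sum1: "(\<Sum>t<2^l. x t) = 1"
    using rows[of "k + l"] by (simp add: sum_split Cmat_def dvec_def)
  show "pkb_sat TYPE('d) CB {PC [(B i j, axs j). j \<leftarrow> [0..<l]] Eq (q i) | i. i < k}"
    unfolding pkb_sat_def
  proof (intro exI conjI allI impI ballI)
    fix i assume "i < (2::nat)^l" show "is_interp (Is i)" by (rule Isi)
  next
    fix i assume "i < (2::nat)^l" then show "0 \<le> x i" using xnn by simp
  next
    show "(\<Sum>i<2^l. x i) = 1" by (rule sum1)
  next
    fix i assume "i < (2::nat)^l" "0 < x i" then show "models_cbox (Is i) CB" using IsP by blast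
  next
    fix pc assume "pc \<in> {PC [(B i j, axs j). j \<leftarrow> [0..<l]] Eq (q i) | i. i < k}"
    then obtain i where i: "i < k" and pc: "pc = PC [(B i j, axs j). j \<leftarrow> [0..<l]] Eq (q i)" by blast
    have "(\<Sum>j'<2 ^ l + l. Cmat k l B i j' * x j') = dvec k l q i" using rows[of i] i by simp
    then have "(\<Sum>j<l. real_of_rat (B i j) * x (2^l + j)) = real_of_rat (q i)"
      using i by (simp add: sum_split Cmat_def dvec_def)
    moreover have "(\<Sum>j<l. real_of_rat (B i j) * prob_ax (2^l) Is x (axs j))
        = (\<Sum>j<l. real_of_rat (B i j) * x (2^l + j))" by (rule sum.cong) (auto simp: pax)
    ultimately show "constr_holds (2^l) Is x pc"
      by (simp add: pc sum_list_upt_lt comp_def)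
  qed
qed

end
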